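(* Let $k\ge1$, $G=(V,E)$ an inductively $k$-independent graph with $k$-independence ordering $v_1,\dots,v_n$, $f:2^V\to\mathbb{R}_{\ge0}$ monotone submodular with $f(\emptyset)=0$, and $\beta>0$. Let $w_1,\dots,w_n$ and $S_{\mathrm{out}}$ be produced by algorithm PD-MON (described in the context). Then $f(S_{\mathrm{out}})\ge\sum_{i=1}^n w_i$.
   Context: $N(v)$ is the neighbourhood of $v$ (excluding $v$); $G$ is inductively $k$-independent with $k$-independence ordering $v_1,\dots,v_n$ if for every $i$, $G[N(v_i)\cap\{v_i,\dots,v_n\}]$ has no independent set of size more than $k$. For $S\subseteq V$, $f_S(v)=f(S\cup\{v\})-f(S)$. Algorithm PD-MON (parameter $\beta>0$). Phase 1: start with $S=\emptyset$ (a stack) and $w_1=\dots=w_n=0$. For $i=1,\dots,n$: let $C_i=N(v_i)\cap S$ for the current $S$; if $f_S(v_i)>(1+\beta)\sum_{v_j\in C_i}w_j$, set $w_i=f_S(v_i)-\sum_{v_j\in C_i}w_j$ (with $S$ the set before insertion) and push $v_i$ onto $S$; otherwise leave $w_i=0$. Let $S_{\mathrm{end}}$ be $S$ at the end of Phase 1. Phase 2: with $S_{\mathrm{out}}=\emptyset$, pop vertices of $S_{\mathrm{end}}$ in reverse insertion order, adding a popped $v$ to $S_{\mathrm{out}}$ whenever $S_{\mathrm{out}}\cup\{v\}$ is independent. Output $S_{\mathrm{out}}$. *)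

theory Defs
  imports Complex_Main
begin

definition nbhd :: "('a \<Rightarrow> 'a \<Rightarrow> bool) \<Rightarrow> 'a set \<Rightarrow> 'a \<Rightarrow> 'a set" where
  "nbhd E V v = {u \<in> V. E v u \<and> u \<noteq> v}"

definition independent :: "('a \<Rightarrow> 'a \<Rightarrow> bool) \<Rightarrow> 'a set \<Rightarrow> bool" where
  "independent E I \<longleftrightarrow> (\<forall>x\<in>I. \<forall>y\<in>I. \<not> E x y)"

definition k_independence_ordering ::
  "('a \<Rightarrow> 'a \<Rightarrow> bool) \<Rightarrow> nat \<Rightarrow> 'a list \<Rightarrow> bool" where
  "k_independence_ordering E k vs \<longleftrightarrow>
     distinct vs \<and>
     (\<forall>i < length vs. \<forall>I. I \<subseteq> nbhd E (set vs) (vs ! i) \<inter> set (drop i vs) \<longrightarrow>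
         independent E I \<longrightarrow> card I \<le> k)"

definition monotone_set_fun :: "'a set \<Rightarrow> ('a set \<Rightarrow> real) \<Rightarrow> bool" where
  "monotone_set_fun V f \<longleftrightarrow> (\<forall>A B. A \<subseteq> B \<longrightarrow> B \<subseteq> V \<longrightarrow> f A \<le> f B)"

definition submodular :: "'a set \<Rightarrow> ('a set \<Rightarrow> real) \<Rightarrow> bool" where
  "submodular V f \<longleftrightarrow>
     (\<forall>A B. A \<subseteq> V \<longrightarrow> B \<subseteq> V \<longrightarrow> f (A \<union> B) + f (A \<inter> B) \<le> f A + f B)"

text \<open>Phase 1 of PD-MON. The stack S is a list with its top at the head; the weights are
  a function on vertices (w v_i = w_i), initially 0.  Processes the remaining vertices in order.\<close>
fun pd_phase1 :: "('a \<Rightarrow> 'a \<Rightarrow> bool) \<Rightarrow> 'a set \<Rightarrow> ('a set \<Rightarrow> real) \<Rightarrow> real \<Rightarrow>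
    'a list \<Rightarrow> 'a list \<Rightarrow> ('a \<Rightarrow> real) \<Rightarrow> 'a list \<times> ('a \<Rightarrow> real)" where
  "pd_phase1 E V f \<beta> [] S w = (S, w)"
| "pd_phase1 E V f \<beta> (v # vs) S w =
     (let C = nbhd E V v \<inter> set S;
          m = f (set S \<union> {v}) - f (set S);
          s = (\<Sum>u\<in>C. w u)
      in if m > (1 + \<beta>) * s
         then pd_phase1 E V f \<beta> vs (v # S) (w(v := m - s))
         else pd_phase1 E V f \<beta> vs S w)"

fun pd_phase2 :: "('a \<Rightarrow> 'a \<Rightarrow> bool) \<Rightarrow> 'a list \<Rightarrow> 'a set \<Rightarrow> 'a set" where
  "pd_phase2 E [] Out = Out"
| "pd_phase2 E (v # S) Out =
     (if independent E (insert v Out) then pd_phase2 E S (insert v Out) else pd_phase2 E S Out)"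

definition pd_mon_weights :: "('a \<Rightarrow> 'a \<Rightarrow> bool) \<Rightarrow> ('a set \<Rightarrow> real) \<Rightarrow> real \<Rightarrow> 'a list \<Rightarrow> ('a \<Rightarrow> real)" where
  "pd_mon_weights E f \<beta> vs = snd (pd_phase1 E (set vs) f \<beta> vs [] (\<lambda>_. 0))"

definition pd_mon_out :: "('a \<Rightarrow> 'a \<Rightarrow> bool) \<Rightarrow> ('a set \<Rightarrow> real) \<Rightarrow> real \<Rightarrow> 'a list \<Rightarrow> 'a set" where
  "pd_mon_out E f \<beta> vs = pd_phase2 E (fst (pd_phase1 E (set vs) f \<beta> vs [] (\<lambda>_. 0))) {}"

end

theory Submission
  imports Defs
begin

fun after :: "'a list \<Rightarrow> 'a \<Rightarrow> 'a list" where
  "after [] v = []"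
| "after (x # xs) v = (if x = v then xs else after xs v)"

fun stack_ok :: "('a \<Rightarrow> 'a \<Rightarrow> bool) \<Rightarrow> 'a set \<Rightarrow> ('a set \<Rightarrow> real) \<Rightarrow> ('a \<Rightarrow> real) \<Rightarrow> 'a list \<Rightarrow> bool" where
  "stack_ok E V f w [] = True"
| "stack_ok E V f w (x # rest) = (x \<notin> set rest \<and>
     f (set rest \<union> {x}) - f (set rest) = w x + (\<Sum>u\<in>nbhd E V x \<inter> set rest. w u) \<and>
     stack_ok E V f w rest)"

lemma stack_ok_cong:
  "stack_ok E V f w L \<Longrightarrow> (\<forall>u\<in>set L. w u = w' u) \<Longrightarrow> stack_ok E V f w' L"
proof (induction L)
  case Nil then show ?case by simp
next
  case (Cons x rest)
  have "(\<Sum>u\<in>nbhd E V x \<inter> set rest. w u) = (\<Sum>u\<in>nbhd E V x \<inter> set rest. w' u)"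
    using Cons.prems by (intro sum.cong) auto
  then show ?case using Cons by auto
qed

lemma phase1:
  assumes "distinct vs" "set vs \<inter> set S = {}" "stack_ok E V f w S" "\<forall>u. w u \<ge> 0"
    "\<forall>u. u \<notin> set S \<longrightarrow> w u = 0" "set S \<subseteq> V" "set vs \<subseteq> V" "\<beta> > 0"
    "pd_phase1 E V f \<beta> vs S w = (S', w')"
  shows "stack_ok E V f w' S' \<and> (\<forall>u. w' u \<ge> 0) \<and> (\<forall>u. u \<notin> set S' \<longrightarrow> w' u = 0) \<and> set S' \<subseteq> V"
  using assms
proof (induction E V f \<beta> vs S w rule: pd_phase1.induct)
  case (1 E V f \<beta> S w)
  then show ?case by simp
next
  case (2 E V f \<beta> v vs S w)
  define C where "C = nbhd E V v \<inter> set S"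
  define m where "m = f (set S \<union> {v}) - f (set S)"
  define s where "s = (\<Sum>u\<in>C. w u)"
  have s0: "s \<ge> 0" unfolding s_def using "2.prems"(4) by (simp add: sum_nonneg)
  show ?case
  proof (cases "m > (1 + \<beta>) * s")
    case True
    have eq: "pd_phase1 E V f \<beta> vs (v # S) (w(v := m - s)) = (S', w')"
      using "2.prems"(9) True by (simp add: C_def m_def s_def Let_def)
    have vS: "v \<notin> set S" using "2.prems"(2) by auto
    have "\<beta> * s \<ge> 0" using s0 "2.prems"(8) by simp
    then have pos: "m - s \<ge> 0" using True by (simp add: algebra_simps)
    have sk: "stack_ok E V f (w(v := m - s)) S"
      using stack_ok_cong[OF "2.prems"(3)] vS by auto
    have "(\<Sum>u\<in>C. (w(v := m - s)) u) = s" unfolding s_def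
      using vS by (intro sum.cong) (auto simp: C_def)
    then have "stack_ok E V f (w(v := m - s)) (v # S)"
      using sk vS by (simp add: m_def C_def)
    note sk2 = this
    have a1: "distinct vs" using "2.prems"(1) by simp
    have a2: "set vs \<inter> set (v # S) = {}" using "2.prems"(1,2) by auto
    have a4: "\<forall>u. (w(v := m - s)) u \<ge> 0" using "2.prems"(4) pos by simp
    have a5: "\<forall>u. u \<notin> set (v # S) \<longrightarrow> (w(v := m - s)) u = 0" using "2.prems"(5) by simp
    have a6: "set (v # S) \<subseteq> V" using "2.prems"(6,7) by simp
    have a7: "set vs \<subseteq> V" using "2.prems"(7) by simp
    show ?thesis
      by (rule "2.IH"(1)[OF C_def m_def s_def True a1 a2 sk2 a4 a5 a6 a7 "2.prems"(8) eq])
  next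
    case False
    have eq: "pd_phase1 E V f \<beta> vs S w = (S', w')"
      using "2.prems"(9) False by (simp add: C_def m_def s_def Let_def)
    have a1: "distinct vs" using "2.prems"(1) by simp
    have a2: "set vs \<inter> set S = {}" using "2.prems"(2) by auto
    have a7: "set vs \<subseteq> V" using "2.prems"(7) by simp
    show ?thesis
      by (rule "2.IH"(2)[OF C_def m_def s_def False a1 a2 "2.prems"(3,4,5,6) a7 "2.prems"(8) eq])
  qed
qed

lemma phase2_mono: "Q \<subseteq> pd_phase2 E L Q"
proof (induction L arbitrary: Q)
  case (Cons x L)
  show ?case using Cons.IH[of Q] Cons.IH[of "insert x Q"] by auto
qed simp

lemma phase2_sub: "pd_phase2 E L Q \<subseteq> Q \<union> set L"
proof (induction L arbitrary: Q)
  case (Cons x L)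
  show ?case using Cons.IH[of Q] Cons.IH[of "insert x Q"] by auto
qed simp

lemma phase2_cover:
  assumes "\<forall>u v. E u v \<longrightarrow> E v u" "\<forall>v. \<not> E v v" "independent E Q"
  shows "\<forall>u\<in>set L. u \<in> pd_phase2 E L Q \<or>
     (\<exists>v\<in>pd_phase2 E L Q. E v u \<and> (v \<in> Q \<or> u \<in> set (after L v)))"
  using assms(3)
proof (induction L arbitrary: Q)
  case Nil then show ?case by simp
next
  case (Cons x rest)
  show ?case
  proof (cases "independent E (insert x Q)")
    case True
    let ?R = "pd_phase2 E rest (insert x Q)"
    have R: "pd_phase2 E (x # rest) Q = ?R" using True by (simp only: pd_phase2.simps if_True)
    have xR: "x \<in> ?R" using phase2_mono[of "insert x Q" E rest] by blast
    have IH: "\<forall>u\<in>set rest. u \<in> ?R \<or> (\<exists>v\<in>?R. E v u \<and> (v \<in> insert x Q \<or> u \<in> set (after rest v)))"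
      using Cons.IH[of "insert x Q"] True by simp
    show ?thesis unfolding R
    proof
      fix u assume u: "u \<in> set (x # rest)"
      show "u \<in> ?R \<or> (\<exists>v\<in>?R. E v u \<and> (v \<in> Q \<or> u \<in> set (after (x # rest) v)))"
      proof (cases "u = x")
        case True then show ?thesis using xR by simp
      next
        case False
        then have "u \<in> set rest" using u by simp
        show ?thesis
        proof (cases "u \<in> ?R")
          case False
          then obtain v where v: "v \<in> ?R" "E v u" "v \<in> insert x Q \<or> u \<in> set (after rest v)"
            using IH \<open>u \<in> set rest\<close> by blast
          show ?thesis
          proof (cases "v = x")
            case True then show ?thesis using v \<open>u \<in> set rest\<close> by auto
          next
            case False then show ?thesis using v by auto
          qed
        qed simp
      qed
    qed
  next
    case False
    let ?R = "pd_phase2 E rest Q"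
    have R: "pd_phase2 E (x # rest) Q = ?R" using False by (simp only: pd_phase2.simps if_False)
    have OR: "Q \<subseteq> ?R" using phase2_mono[of Q E rest] by blast
    obtain a b where ab: "a \<in> insert x Q" "b \<in> insert x Q" "E a b"
      using False unfolding independent_def by blast
    have ex: "\<exists>v\<in>Q. E v x"
    proof (cases "a = x")
      case True
      then have "b \<noteq> x" using ab(3) assms(2) by blast
      then have "b \<in> Q" using ab(2) by simp
      moreover have "E b x" using ab(3) True assms(1) by blast
      ultimately show ?thesis by blast
    next
      case False
      then have aQ: "a \<in> Q" using ab(1) by simp
      have "b \<notin> Q" using aQ ab(3) Cons.prems unfolding independent_def by blast
      then have "b = x" using ab(2) by simp
      then show ?thesis using aQ ab(3) by blast
    qed
    then obtain v where v: "v \<in> Q" "E v x" by blast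
    have IH: "\<forall>u\<in>set rest. u \<in> ?R \<or> (\<exists>v\<in>?R. E v u \<and> (v \<in> Q \<or> u \<in> set (after rest v)))"
      using Cons.IH[of Q] Cons.prems by simp
    show ?thesis unfolding R
    proof
      fix u assume u: "u \<in> set (x # rest)"
      show "u \<in> ?R \<or> (\<exists>v\<in>?R. E v u \<and> (v \<in> Q \<or> u \<in> set (after (x # rest) v)))"
      proof (cases "u = x")
        case True then show ?thesis using v OR by blast
      next
        case False
        then have "u \<in> set rest" using u by simp
        show ?thesis
        proof (cases "u \<in> ?R")
          case False
          then obtain v where v: "v \<in> ?R" "E v u" "v \<in> Q \<or> u \<in> set (after rest v)"
            using IH \<open>u \<in> set rest\<close> by blast
          show ?thesis
          proof (cases "v = x")
            case True then show ?thesis using v \<open>u \<in> set rest\<close> by auto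
          next
            case False then show ?thesis using v by auto
          qed
        qed simp
      qed
    qed
  qed
qed

lemma bound:
  assumes "submodular V f" "stack_ok E V f w L" "set L \<subseteq> V" "R \<subseteq> set L" "f {} = 0"
  shows "f R \<ge> (\<Sum>v\<in>R. w v + (\<Sum>u\<in>nbhd E V v \<inter> set (after L v). w u))"
  using assms(2-4)
proof (induction L arbitrary: R)
  case Nil then show ?case using assms(5) by simp
next
  case (Cons x rest)
  have xr: "x \<notin> set rest" using Cons.prems by simp
  let ?R' = "R - {x}"
  have R'sub: "?R' \<subseteq> set rest" using Cons.prems by auto
  have fin: "finite ?R'" using R'sub finite_subset by blast
  have IH: "f ?R' \<ge> (\<Sum>v\<in>?R'. w v + (\<Sum>u\<in>nbhd E V v \<inter> set (after rest v). w u))"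
    using Cons.IH[OF _ _ R'sub] Cons.prems by simp
  have sc: "(\<Sum>v\<in>?R'. w v + (\<Sum>u\<in>nbhd E V v \<inter> set (after (x#rest) v). w u))
      = (\<Sum>v\<in>?R'. w v + (\<Sum>u\<in>nbhd E V v \<inter> set (after rest v). w u))"
    by (intro sum.cong) auto
  show ?case
  proof (cases "x \<in> R")
    case False
    then have "?R' = R" by auto
    then show ?thesis using IH sc by simp
  next
    case True
    have Rsplit: "R = insert x ?R'" using True by auto
    have sm: "f (?R' \<union> {x} \<union> set rest) + f ((?R' \<union> {x}) \<inter> set rest) \<le> f (?R' \<union> {x}) + f (set rest)"
    proof -
      have s1: "?R' \<union> {x} \<subseteq> V" using Cons.prems by auto
      have s2: "set rest \<subseteq> V" using Cons.prems by auto
      show ?thesis using assms(1) s1 s2 unfolding submodular_def by blast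
    qed
    have e1: "?R' \<union> {x} \<union> set rest = set rest \<union> {x}" using R'sub by auto
    have e2: "(?R' \<union> {x}) \<inter> set rest = ?R'" using R'sub xr by auto
    have e3: "?R' \<union> {x} = R" using True by auto
    have mg: "f (set rest \<union> {x}) - f (set rest) = w x + (\<Sum>u\<in>nbhd E V x \<inter> set rest. w u)"
      using Cons.prems by simp
    have "(\<Sum>v\<in>R. w v + (\<Sum>u\<in>nbhd E V v \<inter> set (after (x#rest) v). w u))
       = (w x + (\<Sum>u\<in>nbhd E V x \<inter> set rest. w u)) + (\<Sum>v\<in>?R'. w v + (\<Sum>u\<in>nbhd E V v \<inter> set (after (x#rest) v). w u))"
      using fin by (subst Rsplit, subst sum.insert) auto
    moreover have sm': "f (set rest \<union> {x}) + f ?R' \<le> f R + f (set rest)"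
    proof -
      have sm3: "f (R \<union> set rest) + f (R \<inter> set rest) \<le> f R + f (set rest)"
        using sm unfolding e3 .
      have "R \<union> set rest = set rest \<union> {x}" "R \<inter> set rest = ?R'" using e1 e2 e3 by auto
      then show ?thesis using sm3 by simp
    qed
    ultimately show ?thesis using mg IH sc by linarith
  qed
qed

lemma count:
  fixes w :: "'a \<Rightarrow> real"
  assumes "finite R" "\<forall>v\<in>R. finite (C v)" "\<forall>u. w u \<ge> 0" "A \<subseteq> R \<union> (\<Union>v\<in>R. C v)"
    "finite A"
  shows "(\<Sum>u\<in>A. w u) \<le> (\<Sum>v\<in>R. w v + (\<Sum>u\<in>C v. w u))"
proof -
  have U: "(\<Sum>u\<in>(\<Union>v\<in>R. C v). w u) \<le> (\<Sum>v\<in>R. (\<Sum>u\<in>C v. w u))"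
    using assms(1,2)
  proof (induction R rule: finite_induct)
    case empty then show ?case by simp
  next
    case (insert a F)
    have fF: "finite (\<Union>v\<in>F. C v)" using insert by auto
    have "(\<Sum>u\<in>(\<Union>v\<in>insert a F. C v). w u) = (\<Sum>u\<in>C a \<union> (\<Union>v\<in>F. C v). w u)" by simp
    also have "\<dots> \<le> (\<Sum>u\<in>C a. w u) + (\<Sum>u\<in>(\<Union>v\<in>F. C v). w u)"
    proof -
      have "0 \<le> (\<Sum>u\<in>C a \<inter> (\<Union>v\<in>F. C v). w u)" using assms(3) by (simp add: sum_nonneg)
      then show ?thesis using sum.union_inter[of "C a" "\<Union>v\<in>F. C v" w] fF insert.prems by simp
    qed
    finally show ?case using insert by simp
  qed
  have fU: "finite (\<Union>v\<in>R. C v)" using assms(1,2) by auto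
  have "(\<Sum>u\<in>A. w u) \<le> (\<Sum>u\<in>R \<union> (\<Union>v\<in>R. C v). w u)"
    using assms(1,3,4) fU by (intro sum_mono2) auto
  also have "\<dots> \<le> (\<Sum>u\<in>R. w u) + (\<Sum>u\<in>(\<Union>v\<in>R. C v). w u)"
  proof -
    have "0 \<le> (\<Sum>u\<in>R \<inter> (\<Union>v\<in>R. C v). w u)" using assms(3) by (simp add: sum_nonneg)
    then show ?thesis using sum.union_inter[of R "\<Union>v\<in>R. C v" w] fU assms(1) by simp
  qed
  also have "\<dots> \<le> (\<Sum>v\<in>R. w v + (\<Sum>u\<in>C v. w u))"
    using U by (simp add: sum.distrib)
  finally show ?thesis .
qed

lemma after_distinct: "distinct L \<Longrightarrow> u \<in> set (after L v) \<Longrightarrow> u \<noteq> v"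
  by (induction L) (auto split: if_splits)

lemma after_sub: "set (after L v) \<subseteq> set L"
  by (induction L) auto

lemma stack_distinct: "stack_ok E V f w L \<Longrightarrow> distinct L"
  by (induction L) auto

theorem lemma3:
  fixes E :: "'a \<Rightarrow> 'a \<Rightarrow> bool" and vs :: "'a list" and k :: nat
    and f :: "'a set \<Rightarrow> real" and \<beta> :: real
  assumes "k \<ge> 1"
    and "\<forall>u v. E u v \<longrightarrow> E v u"
    and "\<forall>v. \<not> E v v"
    and "k_independence_ordering E k vs"
    and "\<forall>A. A \<subseteq> set vs \<longrightarrow> f A \<ge> 0"
    and "monotone_set_fun (set vs) f"
    and "submodular (set vs) f"
    and "f {} = 0"
    and "\<beta> > 0"
  shows "f (pd_mon_out E f \<beta> vs) \<ge> (\<Sum>i<length vs. pd_mon_weights E f \<beta> vs (vs ! i))"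
proof -
  define V where "V = set vs"
  obtain L W where LW: "pd_phase1 E V f \<beta> vs [] (\<lambda>_. 0) = (L, W)"
    by (metis surj_pair)
  have dv: "distinct vs" using assms(4) unfolding k_independence_ordering_def by simp
  have P: "stack_ok E V f W L \<and> (\<forall>u. W u \<ge> 0) \<and> (\<forall>u. u \<notin> set L \<longrightarrow> W u = 0) \<and> set L \<subseteq> V"
    using phase1[OF dv _ _ _ _ _ _ assms(9) LW] by (simp add: V_def)
  have W: "pd_mon_weights E f \<beta> vs = W" using LW by (simp add: pd_mon_weights_def V_def)
  define R where "R = pd_phase2 E L {}"
  have Rout: "pd_mon_out E f \<beta> vs = R" using LW by (simp add: pd_mon_out_def V_def R_def)
  have RL: "R \<subseteq> set L" using phase2_sub[of E L "{}"] by (simp add: R_def)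
  have dL: "distinct L" using P stack_distinct by blast
  have cov: "\<forall>u\<in>set L. u \<in> R \<or> (\<exists>v\<in>R. E v u \<and> u \<in> set (after L v))"
    using phase2_cover[OF assms(2,3), of "{}" L] by (simp add: R_def independent_def)
  have cov2: "set L \<subseteq> R \<union> (\<Union>v\<in>R. nbhd E V v \<inter> set (after L v))"
  proof
    fix u assume u: "u \<in> set L"
    show "u \<in> R \<union> (\<Union>v\<in>R. nbhd E V v \<inter> set (after L v))"
    proof (cases "u \<in> R")
      case False
      then obtain v where v: "v \<in> R" "E v u" "u \<in> set (after L v)" using cov u by blast
      have "u \<noteq> v" using after_distinct[OF dL v(3)] .
      then have "u \<in> nbhd E V v" using v u P unfolding nbhd_def by auto
      then show ?thesis using v by blast
    qed simp
  qed
  have finR: "finite R" using RL finite_subset by blast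
  have "(\<Sum>u\<in>set L. W u) \<le> (\<Sum>v\<in>R. W v + (\<Sum>u\<in>nbhd E V v \<inter> set (after L v). W u))"
    using count[OF finR _ _ cov2] P by auto
  also have "\<dots> \<le> f R"
    using bound[of V f E W L R, OF _ _ _ RL assms(8)] assms(7) P by (simp add: V_def)
  finally have main: "(\<Sum>u\<in>set L. W u) \<le> f R" .
  have "(\<Sum>i<length vs. W (vs ! i)) = (\<Sum>u\<in>set vs. W u)"
    using sum.reindex_bij_betw[OF bij_betw_nth[OF dv refl refl], of W] by simp
  also have "\<dots> = (\<Sum>u\<in>set L. W u)"
    using P by (intro sum.mono_neutral_right) (auto simp: V_def)
  finally show ?thesis using main W Rout by simp
qed

end
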